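(* If $n\ge 1$ is odd, then $a_{2(2)}(n)=b_2(2n+1,n+1)$. More generally, let $m,\ell\geq 2$ and let $n\ge1$ be not divisible by $\ell$, with $n=\ell k+r$ for integers $k$ and $1\leq r<\ell$. Then \[a_{m(\ell)}(n)=a_{(m-1)(\ell)}(2n+\ell-r,\,n+\ell-r).\]
   Context: An $\ell$-regular partition is a partition with no part divisible by $\ell$. $a_{m(\ell)}(n)$ is the number of $\ell$-regular partitions of $n$ in which the smallest part occurs at least $m$ times. $a_{m(\ell)}(N,j)$ is the number of $\ell$-regular partitions of $N$ in which the smallest part occurs at least $m$ times and the largest part minus the smallest part equals $j$. $b_\ell(N,j)$ is the number of $\ell$-regular partitions of $N$ in which the largest part minus the smallest part equals $j$. *)

theory Defs
  imports Main "HOL-Library.Multiset"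
begin

definition partitions :: "nat \<Rightarrow> nat multiset set" where
  "partitions N = {p. (\<forall>x\<in>#p. 0 < x) \<and> sum_mset p = N}"

definition regular :: "nat \<Rightarrow> nat multiset \<Rightarrow> bool" where
  "regular l p \<longleftrightarrow> (\<forall>x\<in>#p. \<not> l dvd x)"

definition smallest_part :: "nat multiset \<Rightarrow> nat" where
  "smallest_part p = Min (set_mset p)"

definition largest_part :: "nat multiset \<Rightarrow> nat" where
  "largest_part p = Max (set_mset p)"

definition a_reg :: "nat \<Rightarrow> nat \<Rightarrow> nat \<Rightarrow> nat" where
  "a_reg m l n = card {p \<in> partitions n. p \<noteq> {#} \<and> regular l p
                        \<and> m \<le> count p (smallest_part p)}"

definition a_reg2 :: "nat \<Rightarrow> nat \<Rightarrow> nat \<Rightarrow> nat \<Rightarrow> nat" where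
  "a_reg2 m l N j = card {p \<in> partitions N. p \<noteq> {#} \<and> regular l p
                        \<and> m \<le> count p (smallest_part p)
                        \<and> largest_part p - smallest_part p = j}"

definition b_reg :: "nat \<Rightarrow> nat \<Rightarrow> nat \<Rightarrow> nat" where
  "b_reg l N j = card {p \<in> partitions N. p \<noteq> {#} \<and> regular l p
                        \<and> largest_part p - smallest_part p = j}"

end

theory Submission
  imports Defs
begin

lemma mem_le_sum: "x \<in># (M::nat multiset) \<Longrightarrow> x \<le> sum_mset M"
  using sum_mset.remove[of x M] by simp

lemma main:
  fixes m l n r :: nat
  assumes m: "2 \<le> m" and r1: "1 \<le> r" and rl: "r < l" and dv: "l dvd (n - r)" and rn: "r \<le> n"
  shows "a_reg m l n = a_reg2 (m-1) l (2*n + l - r) (n + l - r)"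
proof -
  define j where "j = n + l - r"
  define A where "A = {p \<in> partitions n. p \<noteq> {#} \<and> regular l p \<and> m \<le> count p (smallest_part p)}"
  define B where "B = {p \<in> partitions (2*n + l - r). p \<noteq> {#} \<and> regular l p
                        \<and> m - 1 \<le> count p (smallest_part p)
                        \<and> largest_part p - smallest_part p = j}"
  define f where "f p = p - {#smallest_part p#} + {#smallest_part p + j#}" for p
  define g where "g q = q - {#largest_part q#} + {#smallest_part q#}" for q
  have jpos: "j > 0" unfolding j_def using rl by simp
  have fA: "f p \<in> B \<and> g (f p) = p" if pA: "p \<in> A" for p
  proof -
    let ?s = "smallest_part p"
    have ne: "p \<noteq> {#}" and sum: "sum_mset p = n" and pos: "\<forall>x\<in>#p. 0 < x"
      and reg: "regular l p" and cnt: "m \<le> count p ?s"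
      using pA unfolding A_def partitions_def by auto
    have sin: "?s \<in># p" unfolding smallest_part_def using ne by simp
    have sle: "\<And>x. x \<in># p \<Longrightarrow> ?s \<le> x" unfolding smallest_part_def by simp
    have c2: "count (p - {#?s#}) ?s \<ge> 1" using cnt m by simp
    hence sin2: "?s \<in># p - {#?s#}" by (simp add: count_greater_zero_iff[symmetric] del: count_greater_zero_iff)
    have sum2: "sum_mset (p - {#?s#}) = n - ?s" using sum_mset.remove[OF sin] sum by simp
    have fp: "f p = p - {#?s#} + {#?s + j#}" unfolding f_def by simp
    have sm: "smallest_part (f p) = ?s"
      unfolding fp smallest_part_def[of "p - {#?s#} + {#?s + j#}"]
      apply (rule Min_eqI)
      using sin2 sle by (auto dest: in_diffD)
    have lg: "largest_part (f p) = ?s + j"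
      unfolding fp largest_part_def[of "p - {#?s#} + {#?s + j#}"]
      apply (rule Max_eqI)
        apply simp
       apply (auto)
      subgoal for y using mem_le_sum[of y "p - {#?s#}"] sum2 rl unfolding j_def by linarith
      done
    have "sum_mset (f p) = 2*n + l - r" unfolding fp using sum2 rn rl sle[OF sin] sum mem_le_sum[OF sin]
      unfolding j_def by simp
    moreover have "\<forall>x\<in>#f p. 0 < x" unfolding fp using pos jpos by (auto dest: in_diffD)
    moreover have "regular l (f p)"
    proof -
      have "\<not> l dvd ?s" using reg sin unfolding regular_def by auto
      moreover have "?s + j = ?s + (n - r) + l" unfolding j_def using rn by simp
      ultimately have "\<not> l dvd (?s + j)" using dv by (metis dvd_add_left_iff dvd_add_right_iff dvd_refl)
      thus ?thesis using reg unfolding regular_def fp by (auto dest: in_diffD)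
    qed
    moreover have "m - 1 \<le> count (f p) (smallest_part (f p))"
    proof -
      have "m - 1 \<le> count (f p) ?s" unfolding fp using cnt jpos by simp
      thus ?thesis using sm by simp
    qed
    moreover have "f p \<noteq> {#}" unfolding fp by simp
    ultimately have "f p \<in> B" unfolding B_def partitions_def using sm lg by auto
    moreover have "g (f p) = p" unfolding g_def using sm lg sin by (simp add: fp)
    ultimately show ?thesis by simp
  qed
  have gB: "g q \<in> A \<and> f (g q) = q" if qB: "q \<in> B" for q
  proof -
    let ?s = "smallest_part q" and ?L = "largest_part q"
    have ne: "q \<noteq> {#}" and sum: "sum_mset q = 2*n + l - r" and pos: "\<forall>x\<in>#q. 0 < x"
      and reg: "regular l q" and cnt: "m - 1 \<le> count q ?s" and d: "?L - ?s = j"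
      using qB unfolding B_def partitions_def by auto
    have sin: "?s \<in># q" unfolding smallest_part_def using ne by simp
    have sle: "\<And>x. x \<in># q \<Longrightarrow> ?s \<le> x" unfolding smallest_part_def by simp
    have Lin: "?L \<in># q" unfolding largest_part_def using ne by simp
    have Lge: "?s \<le> ?L" using sle Lin by simp
    have LL: "?L = ?s + j" using d Lge by simp
    have neq: "?L \<noteq> ?s" using LL jpos by simp
    have sin2: "?s \<in># q - {#?L#}" using sin neq by (simp add: in_diff_count)
    have sum2: "sum_mset (q - {#?L#}) = 2*n + l - r - ?L" using sum_mset.remove[OF Lin] sum by simp
    have Lle: "?L \<le> 2*n + l - r" using mem_le_sum[OF Lin] sum by simp
    have gq: "g q = q - {#?L#} + {#?s#}" unfolding g_def by simp
    have sm: "smallest_part (g q) = ?s"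
      unfolding gq smallest_part_def[of "q - {#?L#} + {#?s#}"]
      apply (rule Min_eqI)
      using sin2 sle by (auto dest: in_diffD)
    have "sum_mset (g q) = n" unfolding gq using sum2 Lle LL unfolding j_def using rn rl by simp
    moreover have "\<forall>x\<in>#g q. 0 < x" unfolding gq using pos sin by (auto dest: in_diffD)
    moreover have "regular l (g q)" using reg sin unfolding regular_def gq by (auto dest: in_diffD)
    moreover have "m \<le> count (g q) (smallest_part (g q))"
    proof -
      have "m \<le> count (g q) ?s" unfolding gq using cnt neq m by simp
      thus ?thesis using sm by simp
    qed
    moreover have "g q \<noteq> {#}" unfolding gq by simp
    ultimately have "g q \<in> A" unfolding A_def partitions_def by auto
    moreover have "f (g q) = q" unfolding f_def using sm Lin LL by (simp add: gq)
    ultimately show ?thesis by simp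
  qed
  have "bij_betw f A B"
    by (rule bij_betw_byWitness[where f'=g]) (use fA gB in auto)
  hence "card A = card B" by (rule bij_betw_same_card)
  thus ?thesis unfolding a_reg_def a_reg2_def A_def B_def j_def .
qed

theorem theorem5p6:
  shows "(\<forall>n::nat. 1 \<le> n \<and> odd n \<longrightarrow> a_reg 2 2 n = b_reg 2 (2*n+1) (n+1))
       \<and> (\<forall>(m::nat) (l::nat) (n::nat) (k::nat) (r::nat).
            2 \<le> m \<and> 2 \<le> l \<and> 1 \<le> n \<and> \<not> l dvd n \<and> n = l*k + r \<and> 1 \<le> r \<and> r < l
            \<longrightarrow> a_reg m l n = a_reg2 (m-1) l (2*n + l - r) (n + l - r))"
proof (intro conjI allI impI)
  fix n :: nat assume h: "1 \<le> n \<and> odd n"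
  have "a_reg 2 2 n = a_reg2 1 2 (2*n + 2 - 1) (n + 2 - 1)"
    using main[of 2 1 2 n] h by (simp add: odd_pos)
  also have "\<dots> = b_reg 2 (2*n+1) (n+1)"
  proof -
    have "\<And>p. p \<noteq> {#} \<Longrightarrow> 1 \<le> count p (smallest_part p)"
      unfolding smallest_part_def by (simp add: Suc_le_eq)
    thus ?thesis unfolding a_reg2_def b_reg_def by (metis (lifting) numeral_1_eq_Suc_0 add_Suc_right mult_2 add_diff_cancel_right' Suc_eq_plus1 add_2_eq_Suc')
  qed
  finally show "a_reg 2 2 n = b_reg 2 (2*n+1) (n+1)" .
next
  fix m l n k r :: nat
  assume h: "2 \<le> m \<and> 2 \<le> l \<and> 1 \<le> n \<and> \<not> l dvd n \<and> n = l*k + r \<and> 1 \<le> r \<and> r < l"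
  show "a_reg m l n = a_reg2 (m-1) l (2*n + l - r) (n + l - r)"
    by (rule main) (use h in auto)
qed

end
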